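(* Let $\rho=\frac12(I+x\sigma_1+y\sigma_2+z\sigma_3)$ with $(x,y,z)\in\mathbb R^3$ and $r:=\sqrt{x^2+y^2+z^2}\in[0,1)$, let $A\in M_2(\mathbb C)$ be self-adjoint and $f\in\mathcal F^{\,r}_{op}$. Let $\varphi_1,\varphi_2$ be an orthonormal basis of eigenvectors of $\rho$ with $\rho\varphi_1=\frac{1-r}{2}\varphi_1$, $\rho\varphi_2=\frac{1+r}{2}\varphi_2$, let $A_0=A-\mathrm{Tr}(\rho A)I$ and $a_{12}=\langle A_0\varphi_1,\varphi_2\rangle$. Then $$I^f_\rho(A)=\big[1-m_{\tilde f}(1-r,1+r)\big]\,|a_{12}|^2.$$
   Context: $\sigma_1=\begin{pmatrix}0&1\\1&0\end{pmatrix}$, $\sigma_2=\begin{pmatrix}0&-i\\i&0\end{pmatrix}$, $\sigma_3=\begin{pmatrix}1&0\\0&-1\end{pmatrix}$ are the Pauli matrices. $\mathcal F_{op}$ is the class of functions $f:(0,\infty)\to(0,\infty)$ that are operator monotone, satisfy $f(1)=1$ and $tf(t^{-1})=f(t)$ for all $t>0$. $f(0):=\lim_{x\to0^+}f(x)$, and $\mathcal F^{\,r}_{op}=\{f\in\mathcal F_{op}: f(0)\neq0\}$. For $f\in\mathcal F^{\,r}_{op}$, $\tilde f(x):=\frac12\big[(x+1)-(x-1)^2\frac{f(0)}{f(x)}\big]$ for $x>0$. For $g\in\mathcal F_{op}$ and $x,y>0$, $m_g(x,y)=xg(y/x)$. $L_\rho(X)=\rho X$, $R_\rho(X)=X\rho$,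 and $m_f(L_\rho,R_\rho)$ multiplies the entry $X_{ij}$ of $X$ (in an orthonormal eigenbasis of $\rho$ with eigenvalues $\lambda_i$) by $m_f(\lambda_i,\lambda_j)$. $\|X\|^2_{\rho,f}=\mathrm{Tr}\big(X^* m_f(L_\rho,R_\rho)^{-1}(X)\big)$. The $f$-information is $I^f_\rho(A)=\frac{f(0)}{2}\|i[\rho,A]\|^2_{\rho,f}$. *)

theory Defs
  imports "HOL-Analysis.Analysis" "Jordan_Normal_Form.Matrix"
begin

definition adj :: "complex mat \<Rightarrow> complex mat" where
  "adj A = mat (dim_col A) (dim_row A) (\<lambda>(i,j). cnj (A $$ (j,i)))"

definition mtrace :: "complex mat \<Rightarrow> complex" where
  "mtrace A = (\<Sum>i<dim_row A. A $$ (i,i))"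

definition hermitian_mat :: "complex mat \<Rightarrow> bool" where
  "hermitian_mat A \<longleftrightarrow> A \<in> carrier_mat (dim_row A) (dim_row A) \<and> adj A = A"

definition psd_mat :: "complex mat \<Rightarrow> bool" where
  "psd_mat A \<longleftrightarrow> A \<in> carrier_mat (dim_row A) (dim_row A) \<and>
     (\<forall>v \<in> carrier_vec (dim_row A). Im ((A *\<^sub>v v) \<bullet>c v) = 0 \<and> Re ((A *\<^sub>v v) \<bullet>c v) \<ge> 0)"

definition unitary_mat :: "nat \<Rightarrow> complex mat \<Rightarrow> bool" where
  "unitary_mat n U \<longleftrightarrow> U \<in> carrier_mat n n \<and> adj U * U = 1\<^sub>m n"

definition diag_c :: "nat \<Rightarrow> (nat \<Rightarrow> real) \<Rightarrow> complex mat" where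
  "diag_c n d = mat n n (\<lambda>(i,j). if i = j then complex_of_real (d i) else 0)"

definition comm :: "complex mat \<Rightarrow> complex mat \<Rightarrow> complex mat" where
  "comm A B = A * B - B * A"

definition sigma1 :: "complex mat" where
  "sigma1 = mat_of_rows_list 2 [[0, 1], [1, 0]]"
definition sigma2 :: "complex mat" where
  "sigma2 = mat_of_rows_list 2 [[0, -\<i>], [\<i>, 0]]"
definition sigma3 :: "complex mat" where
  "sigma3 = mat_of_rows_list 2 [[1, 0], [0, -1]]"

definition bloch_state :: "real \<Rightarrow> real \<Rightarrow> real \<Rightarrow> complex mat" where
  "bloch_state x y z = (1/2 :: complex) \<cdot>\<^sub>m
     (1\<^sub>m 2 + complex_of_real x \<cdot>\<^sub>m sigma1 + complex_of_real y \<cdot>\<^sub>m sigma2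
          + complex_of_real z \<cdot>\<^sub>m sigma3)"

text \<open>f is operator monotone on (0,\<infinity>): for all n and all positive definite n\<times>n matrices
  A = U diag(a) U*, B = V diag(b) V* with A \<le> B we have f(A) \<le> f(B), where
  f(A) = U diag(f a) U* is the functional calculus.\<close>
definition operator_monotone :: "(real \<Rightarrow> real) \<Rightarrow> bool" where
  "operator_monotone f \<longleftrightarrow>
    (\<forall>n U V a b. unitary_mat n U \<and> unitary_mat n V \<and> (\<forall>i<n. a i > 0 \<and> b i > 0) \<and>
       psd_mat (V * diag_c n b * adj V - U * diag_c n a * adj U) \<longrightarrow>
       psd_mat (V * diag_c n (f \<circ> b) * adj V - U * diag_c n (f \<circ> a) * adj U))"

definition F_op :: "(real \<Rightarrow> real) \<Rightarrow> bool" where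
  "F_op f \<longleftrightarrow> (\<forall>x>0. f x > 0) \<and> operator_monotone f \<and> f 1 = 1 \<and>
              (\<forall>t>0. t * f (1 / t) = f t)"

definition fzero :: "(real \<Rightarrow> real) \<Rightarrow> real" where
  "fzero f = Lim (at_right 0) f"

definition F_op_r :: "(real \<Rightarrow> real) \<Rightarrow> bool" where
  "F_op_r f \<longleftrightarrow> F_op f \<and> fzero f \<noteq> 0"

definition ftilde :: "(real \<Rightarrow> real) \<Rightarrow> real \<Rightarrow> real" where
  "ftilde f x = ((x + 1) - (x - 1)^2 * fzero f / f x) / 2"

definition mean_of :: "(real \<Rightarrow> real) \<Rightarrow> real \<Rightarrow> real \<Rightarrow> real" where
  "mean_of g x y = x * g (y / x)"

text \<open>\<open>m_f(L_\<rho>,R_\<rho>)^{-1}(X)\<close> computed in an orthonormal eigenbasis of \<rho> (columns of U,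
  eigenvalues lam), and \<open>\<parallel>X\<parallel>^2_{\<rho>,f} = Tr(X^* m_f(L_\<rho>,R_\<rho>)^{-1}(X))\<close>.\<close>
definition mf_inv_in_basis ::
  "(real \<Rightarrow> real) \<Rightarrow> nat \<Rightarrow> complex mat \<Rightarrow> (nat \<Rightarrow> real) \<Rightarrow> complex mat \<Rightarrow> complex mat" where
  "mf_inv_in_basis f n U lam X =
     U * mat n n (\<lambda>(i,j). (adj U * X * U) $$ (i,j) / complex_of_real (mean_of f (lam i) (lam j)))
       * adj U"

definition fnorm2 :: "(real \<Rightarrow> real) \<Rightarrow> complex mat \<Rightarrow> complex mat \<Rightarrow> complex" where
  "fnorm2 f \<rho> X =
     (let n = dim_row \<rho>;
          (U, lam) = (SOME (U, lam). unitary_mat n U \<and> \<rho> = U * diag_c n lam * adj U)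
      in mtrace (adj X * mf_inv_in_basis f n U lam X))"

definition finfo :: "(real \<Rightarrow> real) \<Rightarrow> complex mat \<Rightarrow> complex mat \<Rightarrow> complex" where
  "finfo f \<rho> A = complex_of_real (fzero f / 2) * fnorm2 f \<rho> (\<i> \<cdot>\<^sub>m comm \<rho> A)"

end

theory Submission imports Defs "Jordan_Normal_Form.Determinant" begin

lemma sum2: "(\<Sum>i<2. g i) = g 0 + g (1::nat)" "(\<Sum>i\<in>{0..<2}. g i) = g 0 + g (1::nat)"
  by (auto simp: numeral_2_eq_2 atLeast0LessThan lessThan_Suc add.commute)

lemma less2: "(i::nat) < 2 \<longleftrightarrow> i = 0 \<or> i = 1" by auto

lemma mult2: "A \<in> carrier_mat 2 2 \<Longrightarrow> B \<in> carrier_mat 2 2 \<Longrightarrow> i < 2 \<Longrightarrow> j < 2 \<Longrightarrow>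
  (A * B) $$ (i,j) = A$$(i,0) * B$$(0,j) + A$$(i,1) * B$$(1,j)"
  by (simp add: scalar_prod_def sum2)

lemma adj_carrier[simp]: "A \<in> carrier_mat n m \<Longrightarrow> adj A \<in> carrier_mat m n"
  by (simp add: adj_def)

lemma adj_dims[simp]: "dim_row (adj A) = dim_col A" "dim_col (adj A) = dim_row A"
  by (simp_all add: adj_def)

lemma adj_index[simp]: "i < dim_col A \<Longrightarrow> j < dim_row A \<Longrightarrow> adj A $$ (i,j) = cnj (A$$(j,i))"
  by (simp add: adj_def)

lemma mtrace2: "A \<in> carrier_mat 2 2 \<Longrightarrow> mtrace A = A$$(0,0) + A$$(1,1)"
  by (simp add: mtrace_def sum2)

lemma trace_comm2: "A \<in> carrier_mat 2 2 \<Longrightarrow> B \<in> carrier_mat 2 2 \<Longrightarrow> mtrace (A*B) = mtrace (B*A)"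
  by (simp add: mtrace2 mult2 algebra_simps del: index_mult_mat)

lemma adj_mult2: "A \<in> carrier_mat 2 2 \<Longrightarrow> B \<in> carrier_mat 2 2 \<Longrightarrow> adj (A*B) = adj B * adj A"
  by (rule eq_matI) (auto simp: mult2 less2 mult.commute index_mult_mat(2,3) simp del: index_mult_mat(1))

lemma adj_adj[simp]: "adj (adj A) = A"
  by (rule eq_matI) auto

lemma adj_minus: "A \<in> carrier_mat n m \<Longrightarrow> B \<in> carrier_mat n m \<Longrightarrow> adj (A - B) = adj A - adj B"
  by (rule eq_matI) auto

lemma adj_smult: "adj (c \<cdot>\<^sub>m A) = cnj c \<cdot>\<^sub>m adj A"
  by (rule eq_matI) auto


lemma mult_carrier2[simp]: "A \<in> carrier_mat 2 2 \<Longrightarrow> B \<in> carrier_mat 2 2 \<Longrightarrow> A * B \<in> carrier_mat 2 2"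
  by auto
lemma minus_carrier2[simp]: "A \<in> carrier_mat 2 2 \<Longrightarrow> B \<in> carrier_mat 2 2 \<Longrightarrow> A - B \<in> carrier_mat 2 2"
  by auto
lemma adj_carrier2[simp]: "A \<in> carrier_mat 2 2 \<Longrightarrow> adj A \<in> carrier_mat 2 2"
  by auto
lemma assoc2: "(A::complex mat) \<in> carrier_mat 2 2 \<Longrightarrow> B \<in> carrier_mat 2 2 \<Longrightarrow> C \<in> carrier_mat 2 2 \<Longrightarrow> A * B * C = A * (B * C)"
  by (rule assoc_mult_mat) auto
lemma smult_l2: "(A::complex mat) \<in> carrier_mat 2 2 \<Longrightarrow> B \<in> carrier_mat 2 2 \<Longrightarrow> A * (c \<cdot>\<^sub>m B) = c \<cdot>\<^sub>m (A * B)"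
  by (rule mult_smult_distrib) auto
lemma smult_r2: "(A::complex mat) \<in> carrier_mat 2 2 \<Longrightarrow> B \<in> carrier_mat 2 2 \<Longrightarrow> (c \<cdot>\<^sub>m A) * B = c \<cdot>\<^sub>m (A * B)"
  by (rule mult_smult_assoc_mat) auto
lemma minus_l2: "(A::complex mat) \<in> carrier_mat 2 2 \<Longrightarrow> B \<in> carrier_mat 2 2 \<Longrightarrow> C \<in> carrier_mat 2 2 \<Longrightarrow> A * (B - C) = A * B - A * C"
  by (rule mult_minus_distrib_mat) auto
lemma minus_r2: "(A::complex mat) \<in> carrier_mat 2 2 \<Longrightarrow> B \<in> carrier_mat 2 2 \<Longrightarrow> C \<in> carrier_mat 2 2 \<Longrightarrow> (B - C) * A = B * A - C * A"
  by (rule minus_mult_distrib_mat) auto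
lemmas c2 = assoc2 smult_l2 smult_r2 minus_l2 minus_r2

lemma diag_carrier[simp]: "diag_c n l \<in> carrier_mat n n"
  by (simp add: diag_c_def)

lemma diag_dims[simp]: "dim_row (diag_c n l) = n" "dim_col (diag_c n l) = n"
  by (simp_all add: diag_c_def)

lemma diag_index: "i < n \<Longrightarrow> j < n \<Longrightarrow> diag_c n l $$ (i,j) = (if i = j then complex_of_real (l i) else 0)"
  by (simp add: diag_c_def)

lemma norm_sq_c: "cnj z * z = complex_of_real ((cmod z)^2)"
  by (metis complex_norm_square mult.commute)

lemma mrl_carrier: "mat_of_rows_list 2 [[a,b],[c,d]] \<in> carrier_mat 2 2"
  unfolding mat_of_rows_list_def carrier_mat_def by simp

lemma bloch_carrier: "bloch_state x y z \<in> carrier_mat 2 2"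
  unfolding bloch_state_def sigma1_def sigma2_def sigma3_def
  by (intro smult_carrier_mat add_carrier_mat one_carrier_mat mrl_carrier)

lemma key:
  fixes W rho A :: "complex mat" and l :: "nat \<Rightarrow> real"
  assumes W: "W \<in> carrier_mat 2 2" and WW: "adj W * W = 1\<^sub>m 2"
    and rhoD: "rho = W * diag_c 2 l * adj W" and A: "A \<in> carrier_mat 2 2"
    and X_def: "X = \<i> \<cdot>\<^sub>m comm rho A" and Y_def: "Y = adj W * X * W" and B_def: "B = adj W * A * W"
  shows "Y = \<i> \<cdot>\<^sub>m (diag_c 2 l * B - B * diag_c 2 l)"
    and "mtrace (adj X * X) = mtrace (adj Y * Y)"
    and "mtrace rho = l 0 + l 1" "mtrace (rho*rho) = (l 0)^2 + (l 1)^2"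
    and "mtrace (adj X * mf_inv_in_basis f 2 W l X) =
      mtrace (adj Y * mat 2 2 (\<lambda>(i,j). Y $$ (i,j) / complex_of_real (mean_of f (l i) (l j))))"
proof -
  define D where "D = diag_c 2 l"
  have D: "D \<in> carrier_mat 2 2" by (simp add: D_def)
  have aW: "adj W \<in> carrier_mat 2 2" using W by simp
  have WW': "W * adj W = 1\<^sub>m 2" using mat_mult_left_right_inverse[OF aW W WW] .
  have WW3: "adj W * (W * C) = C" if "C \<in> carrier_mat 2 2" for C
    using that W aW by (simp add: assoc2[symmetric] WW)
  have rho: "rho \<in> carrier_mat 2 2" using rhoD W D D_def by auto
  have h1: "adj W * rho = D * adj W"
  proof -
    have "adj W * rho = (adj W * W) * D * adj W" using W aW D by (simp add: rhoD D_def c2)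
    thus ?thesis using WW D aW by simp
  qed
  have h2: "rho * W = W * D"
  proof -
    have "rho * W = W * D * (adj W * W)" using W aW D by (simp add: rhoD D_def c2)
    thus ?thesis using WW D W by simp
  qed
  show "Y = \<i> \<cdot>\<^sub>m (diag_c 2 l * B - B * diag_c 2 l)"
  proof -
    have "Y = \<i> \<cdot>\<^sub>m (adj W * rho * A * W - adj W * A * (rho * W))"
      unfolding Y_def X_def comm_def using W aW rho A
      by (simp add: c2)
    also have "\<dots> = \<i> \<cdot>\<^sub>m (D * adj W * A * W - adj W * A * (W * D))" by (simp add: h1 h2)
    also have "\<dots> = \<i> \<cdot>\<^sub>m (D * B - B * D)" unfolding B_def using W aW A D by (simp add: c2)
    finally show ?thesis by (simp add: D_def)
  qed
  have X: "X \<in> carrier_mat 2 2" unfolding X_def comm_def using rho A by auto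
  have aX: "adj X \<in> carrier_mat 2 2" using X by simp
  have aY: "adj Y = adj W * adj X * W" unfolding Y_def using W aW X
    by (simp add: adj_mult2 c2)
  show "mtrace (adj X * X) = mtrace (adj Y * Y)"
  proof -
    have WW2: "W * (adj W * C) = C" if "C \<in> carrier_mat 2 2" for C
      using that W aW by (simp add: assoc2[symmetric] WW')
    have "adj Y * Y = adj W * adj X * W * (adj W * X * W)" using aY Y_def by simp
    also have "\<dots> = adj W * ((adj X * X) * W)"
      using W aW X aX by (simp add: c2 WW2)
    finally have "adj Y * Y = adj W * ((adj X * X) * W)" .
    also have "mtrace \<dots> = mtrace ((adj X * X) * W * adj W)"
      using W aW X aX by (simp add: trace_comm2)
    also have "\<dots> = mtrace (adj X * X)" using W aW X aX WW' by (simp add: c2)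
    finally show ?thesis by (simp add: \<open>adj Y * Y = adj W * ((adj X * X) * W)\<close>)
  qed
  show "mtrace rho = l 0 + l 1"
  proof -
    have "mtrace rho = mtrace (W * (D * adj W))" using W D aW by (simp add: rhoD D_def c2)
    also have "\<dots> = mtrace ((D * adj W) * W)" using W D aW by (simp add: trace_comm2)
    also have "\<dots> = mtrace D" using W D aW WW by (simp add: c2)
    finally show ?thesis by (simp add: D_def mtrace2 diag_index)
  qed
  show "mtrace (rho*rho) = (l 0)^2 + (l 1)^2"
  proof -
    have "rho * rho = W * (D * D * adj W)" using W D aW rho
      by (simp add: rhoD D_def c2 WW3)
    hence "mtrace (rho * rho) = mtrace (W * (D * D * adj W))" by simp
    also have "\<dots> = mtrace ((D * D * adj W) * W)" by (rule trace_comm2) (use W D aW in auto)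
    also have "\<dots> = mtrace (D * D)" using W D aW WW by (simp add: c2)
    finally show ?thesis using D by (simp add: D_def mtrace2 mult2 diag_index power2_eq_square del: index_mult_mat)
  qed
  define M where "M = mat 2 2 (\<lambda>(i,j). Y $$ (i,j) / complex_of_real (mean_of f (l i) (l j)))"
  have M: "M \<in> carrier_mat 2 2" by (simp add: M_def)
  have MM: "mat 2 2 (\<lambda>(i,j). (adj W * X * W) $$ (i,j) / complex_of_real (mean_of f (l i) (l j))) = M"
    by (simp add: M_def Y_def)
  show "mtrace (adj X * mf_inv_in_basis f 2 W l X) = mtrace (adj Y * M)"
  proof -
    have "mtrace (adj X * mf_inv_in_basis f 2 W l X) = mtrace ((adj X * W * M) * adj W)"
      unfolding mf_inv_in_basis_def MM using W aW X aX M by (simp add: c2)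
    also have "\<dots> = mtrace (adj W * (adj X * W * M))" using W aW X aX M by (simp add: trace_comm2)
    also have "\<dots> = mtrace (adj Y * M)" unfolding aY using W aW X aX M by (simp add: c2)
    finally show ?thesis .
  qed
qed


lemma key2:
  fixes W rho A :: "complex mat" and l :: "nat \<Rightarrow> real"
  assumes W: "W \<in> carrier_mat 2 2" and WW: "adj W * W = 1\<^sub>m 2"
    and rhoD: "rho = W * diag_c 2 l * adj W" and A: "A \<in> carrier_mat 2 2" and Ah: "adj A = A"
    and X_def: "X = \<i> \<cdot>\<^sub>m comm rho A" and Y_def: "Y = adj W * X * W" and B_def: "B = adj W * A * W"
  shows "Y $$ (0,1) = \<i> * complex_of_real (l 0 - l 1) * B $$ (0,1)"
    and "Y $$ (1,0) = \<i> * complex_of_real (l 1 - l 0) * B $$ (1,0)"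
    and "B $$ (1,0) = cnj (B $$ (0,1))"
    and "mtrace (adj X * X) = complex_of_real ((cmod (Y $$ (0,1)))^2 + (cmod (Y $$ (1,0)))^2)"
    and "mtrace (adj X * mf_inv_in_basis f 2 W l X) = complex_of_real
          ((cmod (Y $$ (0,1)))^2 / mean_of f (l 0) (l 1) + (cmod (Y $$ (1,0)))^2 / mean_of f (l 1) (l 0))"
proof -
  note K = key[OF W WW rhoD A X_def Y_def B_def]
  have B: "B \<in> carrier_mat 2 2" using W A B_def by simp
  have Y: "Y \<in> carrier_mat 2 2" using K(1) B by simp
  have Yij: "Y $$ (i,j) = \<i> * (complex_of_real (l i) - complex_of_real (l j)) * B $$ (i,j)" if "i < 2" "j < 2" for i j
    using that B unfolding K(1)
    by (auto simp: mult2 diag_index less2 algebra_simps index_mult_mat(2,3) simp del: index_mult_mat(1))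
  have Y00: "Y $$ (0,0) = 0" and Y11: "Y $$ (1,1) = 0" using Yij[of 0 0] Yij[of 1 1] by auto
  show "Y $$ (0,1) = \<i> * complex_of_real (l 0 - l 1) * B $$ (0,1)"
    and "Y $$ (1,0) = \<i> * complex_of_real (l 1 - l 0) * B $$ (1,0)"
    using Yij[of 0 1] Yij[of 1 0] by auto
  have aB: "adj B = B" unfolding B_def using W A Ah by (simp add: adj_mult2 c2)
  show "B $$ (1,0) = cnj (B $$ (0,1))"
  proof -
    have "B $$ (1,0) = adj B $$ (1,0)" by (simp add: aB)
    also have "\<dots> = cnj (B $$ (0,1))" using B by simp
    finally show ?thesis .
  qed
  show "mtrace (adj X * X) = complex_of_real ((cmod (Y $$ (0,1)))^2 + (cmod (Y $$ (1,0)))^2)"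
    unfolding K(2) using Y Y00 Y11
    by (simp add: mtrace2 mult2 norm_sq_c index_mult_mat(2,3) del: index_mult_mat(1))
  show "mtrace (adj X * mf_inv_in_basis f 2 W l X) = complex_of_real
          ((cmod (Y $$ (0,1)))^2 / mean_of f (l 0) (l 1) + (cmod (Y $$ (1,0)))^2 / mean_of f (l 1) (l 0))"
    unfolding K(5) using Y Y00 Y11
    by (simp add: mtrace2 mult2 norm_sq_c mult.assoc[symmetric] times_divide_eq_right index_mult_mat(2,3) del: index_mult_mat(1))
qed

theorem mainTheorem8:
  fixes x y z :: real and A :: "complex mat" and f :: "real \<Rightarrow> real"
    and phi1 phi2 :: "complex vec"
  defines "\<rho> \<equiv> bloch_state x y z"
    and "r \<equiv> sqrt (x^2 + y^2 + z^2)"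
  defines "A0 \<equiv> A - mtrace (\<rho> * A) \<cdot>\<^sub>m 1\<^sub>m 2"
  defines "a12 \<equiv> (A0 *\<^sub>v phi1) \<bullet>c phi2"
  assumes r_lt: "r < 1"
    and A_carrier: "A \<in> carrier_mat 2 2" and A_herm: "hermitian_mat A"
    and f_class: "F_op_r f"
    and phi_carrier: "phi1 \<in> carrier_vec 2" "phi2 \<in> carrier_vec 2"
    and phi_orthonormal: "phi1 \<bullet>c phi1 = 1" "phi2 \<bullet>c phi2 = 1" "phi1 \<bullet>c phi2 = 0"
    and phi1_eig: "\<rho> *\<^sub>v phi1 = complex_of_real ((1 - r) / 2) \<cdot>\<^sub>v phi1"
    and phi2_eig: "\<rho> *\<^sub>v phi2 = complex_of_real ((1 + r) / 2) \<cdot>\<^sub>v phi2"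
  shows "finfo f \<rho> A =
           complex_of_real ((1 - mean_of (ftilde f) (1 - r) (1 + r)) * (cmod a12)^2)"
  proof -
  define l1 where "l1 = (1 - r) / 2"
  define l2 where "l2 = (1 + r) / 2"
  have r0: "r \<ge> 0" unfolding r_def by simp
  have l1p: "l1 > 0" and l2p: "l2 > 0" using r0 r_lt by (auto simp: l1_def l2_def)
  have rho: "\<rho> \<in> carrier_mat 2 2"
    unfolding \<rho>_def by (rule bloch_carrier)
  have p1: "dim_vec phi1 = 2" and p2: "dim_vec phi2 = 2" using phi_carrier by auto
  have o11: "phi1$0 * cnj (phi1$0) + phi1$1 * cnj (phi1$1) = 1"
    using phi_orthonormal(1) p1 by (simp add: scalar_prod_def sum2)
  have o22: "phi2$0 * cnj (phi2$0) + phi2$1 * cnj (phi2$1) = 1"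
    using phi_orthonormal(2) p2 by (simp add: scalar_prod_def sum2)
  have o12: "phi1$0 * cnj (phi2$0) + phi1$1 * cnj (phi2$1) = 0"
    using phi_orthonormal(3) p1 p2 by (simp add: scalar_prod_def sum2)
  have o21: "phi2$0 * cnj (phi1$0) + phi2$1 * cnj (phi1$1) = 0"
  proof -
    have "cnj (phi1$0 * cnj (phi2$0) + phi1$1 * cnj (phi2$1)) = 0" using o12 by simp
    thus ?thesis by (simp add: mult.commute)
  qed
  have e1: "\<rho> $$ (i,0) * phi1$0 + \<rho> $$ (i,1) * phi1$1 = complex_of_real l1 * phi1$i" if "i < 2" for i
  proof -
    have "(\<rho> *\<^sub>v phi1) $ i = (complex_of_real l1 \<cdot>\<^sub>v phi1) $ i" using phi1_eig[folded l1_def] by simp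
    thus ?thesis using that rho p1 by (simp add: scalar_prod_def sum2)
  qed
  have e2: "\<rho> $$ (i,0) * phi2$0 + \<rho> $$ (i,1) * phi2$1 = complex_of_real l2 * phi2$i" if "i < 2" for i
  proof -
    have "(\<rho> *\<^sub>v phi2) $ i = (complex_of_real l2 \<cdot>\<^sub>v phi2) $ i" using phi2_eig[folded l2_def] by simp
    thus ?thesis using that rho p2 by (simp add: scalar_prod_def sum2)
  qed
  define V where "V = mat 2 2 (\<lambda>(i,j). if j = 0 then phi1 $ i else phi2 $ i)"
  define lV where "lV = (\<lambda>i::nat. if i = 0 then l1 else l2)"
  have V: "V \<in> carrier_mat 2 2" by (simp add: V_def)
  have VV: "adj V * V = 1\<^sub>m 2"
    apply (rule eq_matI)
    using V o11 o22 o12 o21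
    by (auto simp: mult2 less2 V_def mult.commute index_mult_mat(2,3) simp del: index_mult_mat(1))
  have VV': "V * adj V = 1\<^sub>m 2" using mat_mult_left_right_inverse[OF adj_carrier2[OF V] V VV] .
  have rV: "\<rho> * V = V * diag_c 2 lV"
    apply (rule eq_matI)
    using V rho e1 e2
    by (auto simp: mult2 less2 V_def lV_def diag_index mult.commute index_mult_mat(2,3) simp del: index_mult_mat(1))
  have rhoV: "\<rho> = V * diag_c 2 lV * adj V"
  proof -
    have "\<rho> = \<rho> * (V * adj V)" using rho VV' by simp
    also have "\<dots> = (\<rho> * V) * adj V" using rho V by (simp add: assoc2)
    finally show ?thesis using rV by simp
  qed
  define P where "P = (\<lambda>(U, lam). unitary_mat 2 U \<and> \<rho> = U * diag_c 2 lam * adj U)"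
  have "P (V, lV)" using V VV rhoV by (simp add: P_def unitary_mat_def)
  hence "P (SOME p. P p)" by (rule someI)
  moreover obtain U lam where Ul: "(SOME p. P p) = (U, lam)" by (cases "SOME p. P p") auto
  ultimately have PU: "P (U, lam)" by simp
  hence U: "U \<in> carrier_mat 2 2" and UU: "adj U * U = 1\<^sub>m 2" and rhoU: "\<rho> = U * diag_c 2 lam * adj U"
    by (auto simp: P_def unitary_mat_def)
  define X where "X = \<i> \<cdot>\<^sub>m comm \<rho> A"
  have drho: "dim_row \<rho> = 2" using rho by simp
  have fn: "fnorm2 f \<rho> X = mtrace (adj X * mf_inv_in_basis f 2 U lam X)"
    unfolding fnorm2_def drho Let_def using Ul unfolding P_def by simp
  have Ah: "adj A = A" using A_herm by (simp add: hermitian_mat_def)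
  note KU = key2[OF U UU rhoU A_carrier Ah X_def refl refl]
  note KV = key2[OF V VV rhoV A_carrier Ah X_def refl refl]
  note TU = key[OF U UU rhoU A_carrier X_def refl refl]
  note TV = key[OF V VV rhoV A_carrier X_def refl refl]
  define c where "c = mtrace (\<rho> * A)"
  have A0c: "A0 = A - c \<cdot>\<^sub>m 1\<^sub>m 2" by (simp add: A0_def c_def)
  have a12e: "a12 = (adj V * A * V) $$ (1,0) - c * (phi1$0 * cnj (phi2$0) + phi1$1 * cnj (phi2$1))"
    unfolding a12_def A0c using A_carrier V p1 p2
    by (simp add: scalar_prod_def sum2 mult2 V_def algebra_simps index_mult_mat(2,3) del: index_mult_mat(1))
  hence a12V: "a12 = (adj V * A * V) $$ (1,0)" using o12 by simp
  have lsum: "lam 0 + lam 1 = l1 + l2"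
  proof -
    have "complex_of_real (lam 0 + lam 1) = complex_of_real (l1 + l2)" using TU(3) TV(3) by (simp add: lV_def)
    thus ?thesis using of_real_eq_iff by blast
  qed
  have lsq: "(lam 0)^2 + (lam 1)^2 = l1^2 + l2^2"
  proof -
    have "complex_of_real ((lam 0)^2 + (lam 1)^2) = complex_of_real (l1^2 + l2^2)" using TU(4) TV(4) by (simp add: lV_def)
    thus ?thesis using of_real_eq_iff by blast
  qed
  have l1': "lam 1 = l1 + l2 - lam 0" using lsum by simp
  have "(lam 0)^2 + (l1 + l2 - lam 0)^2 = l1^2 + l2^2" using lsq l1' by simp
  hence "(lam 0 - l1) * (lam 0 - l2) = 0" by (simp add: algebra_simps power2_eq_square)
  hence lamc: "(lam 0 = l1 \<and> lam 1 = l2) \<or> (lam 0 = l2 \<and> lam 1 = l1)" using l1' by auto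
  have Ff: "\<forall>x>0. f x > 0" "\<forall>t>0. t * f (1 / t) = f t" using f_class by (auto simp: F_op_r_def F_op_def)
  have msym: "mean_of f b a = mean_of f a b" if "a > 0" "b > 0" for a b
  proof -
    have e: "1 / (b/a) = a/b" by simp
    have "(b/a) * f (a/b) = f (b/a)" using Ff(2)[rule_format, of "b/a"] that unfolding e by simp
    hence "a * ((b/a) * f (a/b)) = a * f (b/a)" by simp
    moreover have "a * ((b/a) * f (a/b)) = b * f (a/b)" using that by simp
    ultimately show ?thesis by (simp add: mean_of_def)
  qed
  have mU: "mean_of f (lam 0) (lam 1) = mean_of f l1 l2" "mean_of f (lam 1) (lam 0) = mean_of f l1 l2"
    using lamc msym[OF l1p l2p] by auto
  define Y where "Y = adj U * X * U"
  define Z where "Z = adj V * X * V"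
  define BV where "BV = adj V * A * V"
  have HS: "(cmod (Y $$ (0,1)))^2 + (cmod (Y $$ (1,0)))^2 = (cmod (Z $$ (0,1)))^2 + (cmod (Z $$ (1,0)))^2"
  proof -
    have "complex_of_real ((cmod (Y $$ (0,1)))^2 + (cmod (Y $$ (1,0)))^2) =
          complex_of_real ((cmod (Z $$ (0,1)))^2 + (cmod (Z $$ (1,0)))^2)"
      using KU(4) KV(4) by (simp add: Y_def Z_def)
    thus ?thesis using of_real_eq_iff by blast
  qed
  have rr: "l2 - l1 = r" "l1 - l2 = - r" by (auto simp: l1_def l2_def field_simps)
  have Z2: "(cmod (Z $$ (0,1)))^2 + (cmod (Z $$ (1,0)))^2 = 2 * r^2 * (cmod a12)^2"
    using KV(1,2,3) a12V rr unfolding Z_def[symmetric] BV_def[symmetric]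
    by (simp add: lV_def norm_mult power_mult_distrib)
  have fnv: "fnorm2 f \<rho> X = complex_of_real (2 * r^2 * (cmod a12)^2 / mean_of f l1 l2)"
    unfolding fn KU(5) mU using HS Z2 unfolding Y_def[symmetric]
    by (simp add: add_divide_distrib[symmetric])
  have fin: "finfo f \<rho> A = complex_of_real (fzero f / 2 * (2 * r^2 * (cmod a12)^2 / mean_of f l1 l2))"
    unfolding finfo_def X_def[symmetric] fnv by simp
  define t where "t = (1 + r) / (1 - r)"
  have tp: "t > 0" using r0 r_lt by (simp add: t_def)
  have ft: "f t > 0" using Ff(1) tp by simp
  have lt: "l2 / l1 = t" using r_lt by (simp add: l1_def l2_def t_def field_simps)
  have m12: "mean_of f l1 l2 = (1 - r) / 2 * f t"
    by (simp add: mean_of_def lt) (simp add: l1_def)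
  have mt: "mean_of (ftilde f) (1 - r) (1 + r) = (1 - r) * ftilde f t"
    by (simp add: mean_of_def t_def)
  have "fzero f / 2 * (2 * r^2 * (cmod a12)^2 / mean_of f l1 l2) =
        (1 - mean_of (ftilde f) (1 - r) (1 + r)) * (cmod a12)^2"
  proof -
    have r1: "1 - r \<noteq> 0" using r_lt by simp
    have t1: "t + 1 = 2/(1-r)" and t2: "t - 1 = 2*r/(1-r)" using r1 by (simp_all add: t_def field_simps)
    have ftl: "(1 - r) * ftilde f t = 1 - 2*r^2*fzero f/((1-r) * f t)"
    proof -
      have "(1 - r) * ftilde f t = (1 - r) * ((2/(1-r) - (2*r/(1-r))^2 * fzero f / f t) / 2)"
        unfolding ftilde_def t1 t2 by simp
      also have "\<dots> = 1 - (1-r) * (2*r/(1-r))^2 * fzero f / f t / 2" using r1 ft by (simp add: field_simps)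
      also have "(1-r) * (2*r/(1-r))^2 = 4*r^2/(1-r)"
      proof -
        have "(1-r) * (2*r/(1-r))^2 = ((1-r) * (4*r^2)) / ((1-r) * (1-r))"
          by (simp add: power_divide power2_eq_square)
        also have "\<dots> = 4*r^2/(1-r)" using r1 by (rule mult_divide_mult_cancel_left)
        finally show ?thesis .
      qed
      finally show ?thesis using r1 ft by (simp add: field_simps)
    qed
    show ?thesis unfolding m12 mt ftl using r1 ft by (simp add: field_simps power2_eq_square)
  qed
  thus ?thesis using fin by simp
qed

end
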